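(* Let $p$ be a prime number. The $p$-adic topology on $\mathbb{N}\setminus p\mathbb{N}$ coincides with the zero-dimensional reflection of the subspace topology on $\mathbb{N}\setminus p\mathbb{N}$ inherited from the Golomb space $\mathbb{N}_\tau$.
   Context: $\mathbb{N}=\{1,2,\dots\}$, $\mathbb{N}_0=\{0\}\cup\mathbb{N}$. The Golomb topology $\tau$ on $\mathbb{N}$ is generated by the base of all sets $a+b\mathbb{N}_0=\{a+bn:n\in\mathbb{N}_0\}$ with $a,b\in\mathbb{N}$ coprime, and $\mathbb{N}_\tau=(\mathbb{N},\tau)$. The $p$-adic topology on a subset of $\mathbb{N}$ is the topology induced from the $p$-adic topology on $\mathbb{Z}$ (base: sets $x+p^n\mathbb{Z}$, $x\in\mathbb{Z}$, $n\in\mathbb{N}$); on $\mathbb{N}$ it is generated by the sets $x+p^n\mathbb{N}_0$, $x,n\in\mathbb{N}$. The zero-dimensional reflection of a topological space $X$ is the set $X$ with the topology generated by the base consisting of all clopen subsets of $X$. *)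

theory Defs
  imports "HOL-Analysis.Analysis"
begin

definition golomb_topology :: "nat topology" where
  "golomb_topology = topology_generated_by
     {{a + b * n | n. True} | a b. a \<ge> 1 \<and> b \<ge> 1 \<and> coprime a b}"

definition padic_topology :: "nat \<Rightarrow> nat topology" where
  "padic_topology p = topology_generated_by
     {{x + p ^ n * k | k. True} | x n. x \<ge> 1 \<and> n \<ge> 1}"

definition zero_dim_reflection :: "'a topology \<Rightarrow> 'a topology" where
  "zero_dim_reflection X = topology_generated_by {U. openin X U \<and> closedin X U}"

end

theory Submission imports Defs begin

lemma coprime_shift: "coprime a b \<Longrightarrow> coprime (a + b*n) (b::nat)"
  by (metis coprime_iff_gcd_eq_1 gcd_add_mult gcd.commute mult.commute add.commute)

lemma gen_open_iff:
  assumes loc: "\<And>B1 B2 x. B1 \<in> S \<Longrightarrow> B2 \<in> S \<Longrightarrow> x \<in> B1 \<Longrightarrow> x \<in> B2 \<Longrightarrow> \<exists>B\<in>S. x \<in> B \<and> B \<subseteq> B1 \<inter> B2"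
  shows "openin (topology_generated_by S) V \<longleftrightarrow> (\<forall>x\<in>V. \<exists>B\<in>S. x \<in> B \<and> B \<subseteq> V)"
proof
  assume "openin (topology_generated_by S) V"
  hence "generate_topology_on S V" by (simp only: openin_topology_generated_by_iff)
  thus "\<forall>x\<in>V. \<exists>B\<in>S. x \<in> B \<and> B \<subseteq> V"
  proof (induction rule: generate_topology_on.induct)
    case Empty then show ?case by simp
  next
    case (Int a b)
    show ?case
    proof
      fix x assume x: "x \<in> a \<inter> b"
      obtain B1 where "B1 \<in> S" "x \<in> B1" "B1 \<subseteq> a" using Int.IH(1) x by blast
      moreover obtain B2 where "B2 \<in> S" "x \<in> B2" "B2 \<subseteq> b" using Int.IH(2) x by blast
      ultimately show "\<exists>B\<in>S. x \<in> B \<and> B \<subseteq> a \<inter> b" using loc[of B1 B2 x] by blast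
    qed
  next
    case (UN K) show ?case using UN.IH by (meson UnionE UnionI subsetI subsetD)
  next
    case (Basis s) then show ?case by blast
  qed
next
  assume H: "\<forall>x\<in>V. \<exists>B\<in>S. x \<in> B \<and> B \<subseteq> V"
  have "V = \<Union>{B\<in>S. B \<subseteq> V}" using H by blast
  moreover have "generate_topology_on S (\<Union>{B\<in>S. B \<subseteq> V})"
    by (rule generate_topology_on.UN) (simp add: generate_topology_on.Basis)
  ultimately show "openin (topology_generated_by S) V"
    by (simp only: openin_topology_generated_by_iff)
qed


lemma golomb_open_iff:
  "openin golomb_topology V \<longleftrightarrow>
     (\<forall>x\<in>V. x \<ge> 1 \<and> (\<exists>b\<ge>1. coprime x b \<and> {x + b*k | k. True} \<subseteq> V))"
  unfolding golomb_topology_def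
proof (subst gen_open_iff, goal_cases)
  case (1 B1 B2 x)
  then obtain a1 b1 a2 b2 where B: "B1 = {a1 + b1*n | n. True}" "B2 = {a2 + b2*n | n. True}"
    "a1 \<ge> 1" "b1 \<ge> 1" "coprime a1 b1" "a2 \<ge> 1" "b2 \<ge> 1" "coprime a2 b2" by blast
  obtain n1 n2 where x: "x = a1 + b1*n1" "x = a2 + b2*n2" using 1 B by blast
  have c1: "coprime x b1" using x(1) B(5) using coprime_shift by blast
  have c2: "coprime x b2" using x(2) B(8) using coprime_shift by blast
  have "{x + (b1*b2)*n | n. True} \<in> {{a + b * n | n. True} | a b. a \<ge> 1 \<and> b \<ge> 1 \<and> coprime a b}"
  proof -
    have "b1*b2 \<ge> 1" using B by simp
    moreover have "coprime x (b1*b2)" using c1 c2 by simp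
    moreover have "x \<ge> 1" using x B by simp
    ultimately show ?thesis by blast
  qed
  moreover have "x \<in> {x + (b1*b2)*n | n. True}" by force
  moreover have "{x + (b1*b2)*n | n. True} \<subseteq> B1 \<inter> B2"
  proof
    fix y assume "y \<in> {x + (b1*b2)*n | n. True}"
    then obtain n where y: "y = x + (b1*b2)*n" by blast
    have "y = a1 + b1*(n1 + b2*n)" using y x by (simp add: algebra_simps)
    moreover have "y = a2 + b2*(n2 + b1*n)" using y x by (simp add: algebra_simps)
    ultimately show "y \<in> B1 \<inter> B2" using B by blast
  qed
  ultimately show ?case by blast
next
  case 2
  show ?case
  proof
    assume H: "\<forall>x\<in>V. \<exists>B\<in>{{a + b * n |n. True} |a b. 1 \<le> a \<and> 1 \<le> b \<and> coprime a b}. x \<in> B \<and> B \<subseteq> V"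
    show "\<forall>x\<in>V. x \<ge> 1 \<and> (\<exists>b\<ge>1. coprime x b \<and> {x + b*k | k. True} \<subseteq> V)"
    proof
      fix x assume "x \<in> V"
      then obtain a b where B: "a \<ge> 1" "b \<ge> 1" "coprime a b" "x \<in> {a + b * n |n. True}"
        "{a + b * n |n. True} \<subseteq> V" using H by blast
      then obtain n0 where x: "x = a + b*n0" by blast
      have "coprime x b" using x B(3) using coprime_shift by blast
      moreover have "{x + b*k | k. True} \<subseteq> V"
      proof
        fix y assume "y \<in> {x + b*k | k. True}"
        then obtain k where "y = x + b*k" by blast
        hence "y = a + b*(n0+k)" using x by (simp add: algebra_simps)
        thus "y \<in> V" using B(5) by blast
      qed
      ultimately show "x \<ge> 1 \<and> (\<exists>b\<ge>1. coprime x b \<and> {x + b*k | k. True} \<subseteq> V)"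
        using B x by auto
    qed
  next
    assume H: "\<forall>x\<in>V. x \<ge> 1 \<and> (\<exists>b\<ge>1. coprime x b \<and> {x + b*k | k. True} \<subseteq> V)"
    show "\<forall>x\<in>V. \<exists>B\<in>{{a + b * n |n. True} |a b. 1 \<le> a \<and> 1 \<le> b \<and> coprime a b}. x \<in> B \<and> B \<subseteq> V"
    proof
      fix x assume "x \<in> V"
      then obtain b where "x \<ge> 1" "b \<ge> 1" "coprime x b" "{x + b*k | k. True} \<subseteq> V" using H by blast
      moreover have "x \<in> {x + b*k | k. True}" by force
      ultimately show "\<exists>B\<in>{{a + b * n |n. True} |a b. 1 \<le> a \<and> 1 \<le> b \<and> coprime a b}. x \<in> B \<and> B \<subseteq> V"
        by blast
    qed
  qed
qed

lemma padic_open_iff: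
  "openin (padic_topology p) V \<longleftrightarrow>
     (\<forall>x\<in>V. x \<ge> 1 \<and> (\<exists>n\<ge>1. {x + p^n*k | k. True} \<subseteq> V))"
  unfolding padic_topology_def
proof (subst gen_open_iff, goal_cases)
  case (1 B1 B2 x)
  then obtain a1 n1 a2 n2 where B: "B1 = {a1 + p^n1*k | k. True}" "B2 = {a2 + p^n2*k | k. True}"
    "a1 \<ge> 1" "n1 \<ge> 1" "a2 \<ge> 1" "n2 \<ge> 1" by blast
  obtain k1 k2 where x: "x = a1 + p^n1*k1" "x = a2 + p^n2*k2" using 1 B by blast
  define N where "N = max n1 n2"
  have "{x + p^N*k | k. True} \<in> {{x + p ^ n * k | k. True} | x n. x \<ge> 1 \<and> n \<ge> 1}"
  proof -
    have "N \<ge> 1" using B N_def by simp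
    moreover have "x \<ge> 1" using x B by simp
    ultimately show ?thesis by blast
  qed
  moreover have "x \<in> {x + p^N*k | k. True}" by force
  moreover have "{x + p^N*k | k. True} \<subseteq> B1 \<inter> B2"
  proof
    fix y assume "y \<in> {x + p^N*k | k. True}"
    then obtain k where y: "y = x + p^N*k" by blast
    have e1: "p^N = p^n1 * p^(N-n1)" by (simp add: N_def flip: power_add)
    have e2: "p^N = p^n2 * p^(N-n2)" by (simp add: N_def flip: power_add)
    have "y = a1 + p^n1*(k1 + p^(N-n1)*k)" using y x e1 by (simp add: algebra_simps)
    moreover have "y = a2 + p^n2*(k2 + p^(N-n2)*k)" using y x e2 by (simp add: algebra_simps)
    ultimately show "y \<in> B1 \<inter> B2" using B by blast
  qed
  ultimately show ?case by blast
next
  case 2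
  show ?case
  proof
    assume H: "\<forall>x\<in>V. \<exists>B\<in>{{x + p ^ n * k | k. True} | x n. x \<ge> 1 \<and> n \<ge> 1}. x \<in> B \<and> B \<subseteq> V"
    show "\<forall>x\<in>V. x \<ge> 1 \<and> (\<exists>n\<ge>1. {x + p^n*k | k. True} \<subseteq> V)"
    proof
      fix x assume "x \<in> V"
      then obtain a n where B: "a \<ge> 1" "n \<ge> 1" "x \<in> {a + p^n * k |k. True}"
        "{a + p^n * k |k. True} \<subseteq> V" using H by blast
      then obtain k0 where x: "x = a + p^n*k0" by blast
      have "{x + p^n*k | k. True} \<subseteq> V"
      proof
        fix y assume "y \<in> {x + p^n*k | k. True}"
        then obtain k where "y = x + p^n*k" by blast
        hence "y = a + p^n*(k0+k)" using x by (simp add: algebra_simps)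
        thus "y \<in> V" using B(4) by blast
      qed
      then show "x \<ge> 1 \<and> (\<exists>n\<ge>1. {x + p^n*k | k. True} \<subseteq> V)"
        using B x by auto
    qed
  next
    assume H: "\<forall>x\<in>V. x \<ge> 1 \<and> (\<exists>n\<ge>1. {x + p^n*k | k. True} \<subseteq> V)"
    show "\<forall>x\<in>V. \<exists>B\<in>{{x + p ^ n * k | k. True} | x n. x \<ge> 1 \<and> n \<ge> 1}. x \<in> B \<and> B \<subseteq> V"
    proof
      fix x assume "x \<in> V"
      then obtain n where "x \<ge> 1" "n \<ge> 1" "{x + p^n*k | k. True} \<subseteq> V" using H by blast
      moreover have "x \<in> {x + p^n*k | k. True}" by force
      ultimately show "\<exists>B\<in>{{x + p ^ n * k | k. True} | x n. x \<ge> 1 \<and> n \<ge> 1}. x \<in> B \<and> B \<subseteq> V"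
        by blast
    qed
  qed
qed

lemma zd_open_iff:
  "openin (zero_dim_reflection X) U \<longleftrightarrow> (\<forall>x\<in>U. \<exists>C. openin X C \<and> closedin X C \<and> x \<in> C \<and> C \<subseteq> U)"
  unfolding zero_dim_reflection_def
proof (subst gen_open_iff)
  fix B1 B2 x
  assume "B1 \<in> {U. openin X U \<and> closedin X U}" "B2 \<in> {U. openin X U \<and> closedin X U}" "x \<in> B1" "x \<in> B2"
  then show "\<exists>B\<in>{U. openin X U \<and> closedin X U}. x \<in> B \<and> B \<subseteq> B1 \<inter> B2"
    by (intro bexI[of _ "B1 \<inter> B2"]) auto
next
  show "(\<forall>x\<in>U. \<exists>B\<in>{U. openin X U \<and> closedin X U}. x \<in> B \<and> B \<subseteq> U) =
    (\<forall>x\<in>U. \<exists>C. openin X C \<and> closedin X C \<and> x \<in> C \<and> C \<subseteq> U)" by blast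
qed


definition pS :: "nat \<Rightarrow> nat set" where "pS p = {n. n \<ge> 1 \<and> \<not> p dvd n}"

lemma topspace_GS: "topspace (subtopology golomb_topology (pS p)) = pS p"
proof -
  have "openin golomb_topology {n. n \<ge> 1}"
    unfolding golomb_open_iff
  proof
    fix x :: nat assume "x \<in> {n. n \<ge> 1}"
    moreover have "{x + 1*k | k. True} \<subseteq> {n. n \<ge> 1}" using \<open>x \<in> {n. n \<ge> 1}\<close> by auto
    ultimately show "x \<ge> 1 \<and> (\<exists>b\<ge>1. coprime x b \<and> {x + b*k | k. True} \<subseteq> {n. n \<ge> 1})"
      by (intro conjI exI[of _ 1]) auto
  qed
  hence "{n. n \<ge> 1} \<subseteq> topspace golomb_topology" by (rule openin_subset)
  thus ?thesis by (auto simp: pS_def topspace_subtopology)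
qed

lemma GS_open_iff:
  "openin (subtopology golomb_topology (pS p)) U \<longleftrightarrow>
    U \<subseteq> pS p \<and> (\<forall>x\<in>U. \<exists>b\<ge>1. coprime x b \<and> {x + b*k | k. True} \<inter> pS p \<subseteq> U)"
proof
  assume "openin (subtopology golomb_topology (pS p)) U"
  then obtain T where T: "openin golomb_topology T" "U = T \<inter> pS p"
    by (auto simp: openin_subtopology)
  show "U \<subseteq> pS p \<and> (\<forall>x\<in>U. \<exists>b\<ge>1. coprime x b \<and> {x + b*k | k. True} \<inter> pS p \<subseteq> U)"
  proof (intro conjI ballI)
    show "U \<subseteq> pS p" using T by blast
  next
    fix x assume "x \<in> U"
    then obtain b where "b \<ge> 1" "coprime x b" "{x + b*k | k. True} \<subseteq> T"
      using T golomb_open_iff by blast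
    then show "\<exists>b\<ge>1. coprime x b \<and> {x + b*k | k. True} \<inter> pS p \<subseteq> U" using T by blast
  qed
next
  assume H: "U \<subseteq> pS p \<and> (\<forall>x\<in>U. \<exists>b\<ge>1. coprime x b \<and> {x + b*k | k. True} \<inter> pS p \<subseteq> U)"
  define T where "T = {y. \<exists>x\<in>U. \<exists>b\<ge>1. coprime x b \<and> {x + b*k | k. True} \<inter> pS p \<subseteq> U \<and> y \<in> {x + b*k | k. True}}"
  have "openin golomb_topology T"
    unfolding golomb_open_iff
  proof
    fix y assume "y \<in> T"
    then obtain x b where xb: "x \<in> U" "b \<ge> 1" "coprime x b" "{x + b*k | k. True} \<inter> pS p \<subseteq> U"
      "y \<in> {x + b*k | k. True}" unfolding T_def by blast
    then obtain k0 where y: "y = x + b*k0" by blast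
    have "x \<ge> 1" using xb H by (auto simp: pS_def)
    hence "y \<ge> 1" using y by simp
    moreover have "coprime y b" using y xb coprime_shift by blast
    moreover have "{y + b*k | k. True} \<subseteq> T"
    proof
      fix z assume "z \<in> {y + b*k | k. True}"
      then obtain k where "z = y + b*k" by blast
      hence "z = x + b*(k0 + k)" using y by (simp add: algebra_simps)
      hence "z \<in> {x + b*k | k. True}" by blast
      thus "z \<in> T" unfolding T_def using xb by blast
    qed
    ultimately show "y \<ge> 1 \<and> (\<exists>b\<ge>1. coprime y b \<and> {y + b*k | k. True} \<subseteq> T)"
      using xb by blast
  qed
  moreover have "U = T \<inter> pS p"
  proof
    show "U \<subseteq> T \<inter> pS p"
    proof
      fix x assume "x \<in> U"
      then obtain b where "b \<ge> 1" "coprime x b" "{x + b*k | k. True} \<inter> pS p \<subseteq> U" using H by blast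
      moreover have "x \<in> {x + b*k | k. True}" by force
      ultimately show "x \<in> T \<inter> pS p" unfolding T_def using H \<open>x \<in> U\<close> by blast
    qed
  next
    show "T \<inter> pS p \<subseteq> U" unfolding T_def by blast
  qed
  ultimately show "openin (subtopology golomb_topology (pS p)) U"
    by (auto simp: openin_subtopology)
qed

lemma cone_in_pS:
  assumes "prime p" "x \<in> pS p" "n \<ge> 1"
  shows "x + p^n*k \<in> pS p"
proof -
  have "p dvd p^n*k" using assms(3) by (simp add: dvd_power)
  moreover have "\<not> p dvd x" "x \<ge> 1" using assms(2) by (auto simp: pS_def)
  ultimately show ?thesis by (auto simp: pS_def dvd_add_left_iff)
qed

lemma PS_open_iff:
  assumes "prime p"
  shows "openin (subtopology (padic_topology p) (pS p)) U \<longleftrightarrow>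
    U \<subseteq> pS p \<and> (\<forall>x\<in>U. \<exists>n\<ge>1. {x + p^n*k | k. True} \<subseteq> U)"
proof
  assume "openin (subtopology (padic_topology p) (pS p)) U"
  then obtain T where T: "openin (padic_topology p) T" "U = T \<inter> pS p"
    by (auto simp: openin_subtopology)
  show "U \<subseteq> pS p \<and> (\<forall>x\<in>U. \<exists>n\<ge>1. {x + p^n*k | k. True} \<subseteq> U)"
  proof (intro conjI ballI)
    show "U \<subseteq> pS p" using T by blast
  next
    fix x assume "x \<in> U"
    then obtain n where n: "n \<ge> 1" "{x + p^n*k | k. True} \<subseteq> T"
      using T padic_open_iff by blast
    have "{x + p^n*k | k. True} \<subseteq> pS p" using cone_in_pS[OF assms _ n(1)] T \<open>x \<in> U\<close> by blast
    then show "\<exists>n\<ge>1. {x + p^n*k | k. True} \<subseteq> U" using T n by blast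
  qed
next
  assume H: "U \<subseteq> pS p \<and> (\<forall>x\<in>U. \<exists>n\<ge>1. {x + p^n*k | k. True} \<subseteq> U)"
  have "openin (padic_topology p) U"
    unfolding padic_open_iff using H by (auto simp: pS_def)
  moreover have "U = U \<inter> pS p" using H by blast
  ultimately show "openin (subtopology (padic_topology p) (pS p)) U"
    by (auto simp: openin_subtopology)
qed

lemma decomp:
  fixes b p :: nat
  assumes "prime p" shows "b \<ge> 1 \<Longrightarrow> \<exists>j c. b = p^j * c \<and> \<not> p dvd c"
proof (induction b rule: less_induct)
  case (less b)
  show ?case
  proof (cases "p dvd b")
    case False then show ?thesis by (intro exI[of _ 0] exI[of _ b]) simp
  next
    case True
    then obtain b' where b': "b = p * b'" by blast
    have p2: "p \<ge> 2" using assms prime_ge_2_nat by blast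
    have "b' \<ge> 1" using less.prems b' by (cases b') auto
    moreover have "b' < b" using b' p2 \<open>b' \<ge> 1\<close> by simp
    ultimately obtain j c where "b' = p^j*c" "\<not> p dvd c" using less.IH by blast
    then show ?thesis using b' by (intro exI[of _ "Suc j"] exI[of _ c]) auto
  qed
qed

lemma nbhd:
  assumes "prime p" "openin (subtopology golomb_topology (pS p)) V" "x \<in> V"
  shows "\<exists>m c. m \<ge> 1 \<and> \<not> p dvd c \<and> (\<forall>k. x + p^m*c*k \<in> V)"
proof -
  obtain b where b: "b \<ge> 1" "coprime x b" "{x + b*k | k. True} \<inter> pS p \<subseteq> V" "x \<in> pS p"
    using assms GS_open_iff by blast
  obtain j c where jc: "b = p^j*c" "\<not> p dvd c" using decomp[OF assms(1) b(1)] by blast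
  have "\<forall>k. x + p^(Suc j)*c*k \<in> V"
  proof
    fix k
    have "x + p^(Suc j)*c*k = x + b*(p*k)" using jc by (simp add: algebra_simps)
    moreover have "x + p^(Suc j)*c*k \<in> pS p"
      using cone_in_pS[OF assms(1) b(4), of "Suc j" "c*k"] by (simp add: mult.assoc)
    ultimately show "x + p^(Suc j)*c*k \<in> V" using b(3) by force
  qed
  then show ?thesis using jc by (intro exI[of _ "Suc j"] exI[of _ c]) auto
qed

lemma K:
  fixes w f c p m x :: nat
  assumes "coprime w f" "f \<ge> 1" "c dvd w" "c \<ge> 1" "p \<ge> 1" "w mod p^m = x mod p^m"
  shows "\<exists>k1 k2. w + f*k1 = x + p^m*c*k2"
proof -
  define P where "P = p^m*c"
  define g where "g = gcd f P"
  have P1: "P \<ge> 1" using assms by (simp add: P_def)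
  have cf: "coprime c f" using assms(1,3) by (meson coprime_commute coprime_imp_coprime dvd_trans dvd_refl)
  have "coprime g c" using cf unfolding g_def by (meson coprime_commute coprime_imp_coprime dvd_trans gcd_dvd1 dvd_refl)
  moreover have "g dvd p^m * c" unfolding g_def P_def by simp
  ultimately have gd: "g dvd p^m" using coprime_dvd_mult_left_iff by blast
  have "int w mod int (p^m) = int x mod int (p^m)" using assms(6) by (metis of_nat_mod)
  hence "int (p^m) dvd int x - int w" by (metis mod_eq_dvd_iff)
  hence "int g dvd int x - int w" using gd by (meson dvd_trans of_nat_dvd_iff)
  moreover have wle: "w \<le> x + P*w"
  proof -
    have "w \<le> P*w" using P1 by simp
    thus "w \<le> x + P*w" by (meson le_add2 order_trans)
  qed
  moreover have "int (x + P*w - w) = (int x - int w) + int P * int w"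
    using wle by (simp add: of_nat_diff)
  moreover have "int g dvd int P" unfolding g_def by (simp only: of_nat_dvd_iff gcd_dvd2)
  ultimately have "int g dvd int (x + P*w - w)" by (metis dvd_add dvd_mult2)
  then obtain t where t: "x + P*w - w = g*t" by (metis of_nat_dvd_iff dvdE)
  obtain u vv :: nat where uv: "f * u = P * vv + g" using bezout_nat[of f P] assms(2) unfolding g_def by auto
  have "w + f*(u*t) = w + (P * vv + g)*t" using uv by (metis mult.assoc)
  also have "\<dots> = w + P * vv * t + g*t" by (simp add: algebra_simps)
  also have "\<dots> = w + P * vv * t + (x + P*w - w)" using t by simp
  also have "\<dots> = x + P*(vv * t + w)" using wle by (simp add: algebra_simps)
  finally show ?thesis unfolding P_def by blast
qed

lemma key:
  assumes pr: "prime p" and oC: "openin (subtopology golomb_topology (pS p)) C"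
    and cC: "closedin (subtopology golomb_topology (pS p)) C" and xC: "x \<in> C"
  shows "\<exists>n\<ge>1. {x + p^n*k | k. True} \<subseteq> C"
proof -
  have p2: "p \<ge> 2" using pr prime_ge_2_nat by blast
  have CS: "C \<subseteq> pS p" using oC GS_open_iff by blast
  have oD: "openin (subtopology golomb_topology (pS p)) (pS p - C)"
    using cC unfolding closedin_def topspace_GS by blast
  obtain m c where mc: "m \<ge> 1" "\<not> p dvd c" "\<forall>k. x + p^m*c*k \<in> C"
    using nbhd[OF pr oC xC] by blast
  have c1: "c \<ge> 1" using mc(2) by (cases c) auto
  have xS: "x \<in> pS p" using CS xC by blast
  have "x + p^m*k \<in> C" for k
  proof (rule ccontr)
    assume ny: "x + p^m*k \<notin> C"
    define y where "y = x + p^m*k"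
    have yS: "y \<in> pS p" unfolding y_def using cone_in_pS[OF pr xS mc(1)] by blast
    hence yD: "y \<in> pS p - C" using ny y_def by blast
    obtain j e where je: "j \<ge> 1" "\<not> p dvd e" "\<forall>k. y + p^j*e*k \<in> pS p - C"
      using nbhd[OF pr oD yD] by blast
    have e1: "e \<ge> 1" using je(2) by (cases e) auto
    define M where "M = max m j"
    have M1: "M \<ge> 1" using mc(1) M_def by simp
    have "coprime p (c*e)" using mc(2) je(2) pr by (simp add: prime_imp_coprime)
    hence cop: "coprime (c*e) (p^M)" by (simp add: coprime_commute)
    obtain u vv :: nat where uv: "(c*e) * u = p^M * vv + gcd (c*e) (p^M)"
      using bezout_nat[of "c*e" "p^M"] c1 e1 by auto
    hence uv': "(c*e) * u = p^M * vv + 1" using cop by simp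
    define w where "w = c*e*u*y"
    have w_eq: "w = y + p^M * (vv * y)" unfolding w_def using uv' by (simp add: algebra_simps)
    have pM12: "p^M = p^m * p^(M-m)" "p^M = p^j * p^(M-j)"
      using M_def by (simp_all flip: power_add)
    have pM3: "p^M = p * p^(M-1)" using M1 by (cases M) auto
    note pM = pM12 pM3
    have wm: "w mod p^m = x mod p^m"
    proof -
      have "w = x + p^m * (k + p^(M-m) * (vv*y))" using w_eq pM(1) y_def by (simp add: algebra_simps)
      thus ?thesis by simp
    qed
    have wj: "w mod p^j = y mod p^j"
    proof -
      have "w = y + p^j * (p^(M-j) * (vv*y))" using w_eq pM(2) by (simp add: algebra_simps)
      thus ?thesis by simp
    qed
    have wS: "w \<in> pS p"
    proof -
      have "w = y + p * (p^(M-1) * (vv*y))" using w_eq pM(3) by (simp add: algebra_simps)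
      moreover have "y \<ge> 1" "\<not> p dvd y" using yS by (auto simp: pS_def)
      ultimately show ?thesis by (auto simp: pS_def dvd_add_left_iff)
    qed
    have pj1: "p \<ge> 1" using p2 by simp
    show False
    proof (cases "w \<in> C")
      case True
      then obtain f where f: "f \<ge> 1" "coprime w f" "{w + f*k | k. True} \<inter> pS p \<subseteq> C"
        using oC GS_open_iff by blast
      have "e dvd w" unfolding w_def by simp
      then obtain k1 k2 where kk: "w + f*k1 = y + p^j*e*k2"
        using K[OF f(2) f(1) _ e1 pj1 wj] by blast
      have "y + p^j*e*k2 \<in> pS p - C" using je(3) by blast
      moreover have "w + f*k1 \<in> {w + f*k | k. True}" by blast
      ultimately show False using kk f(3) by auto
    next
      case False
      hence wD: "w \<in> pS p - C" using wS by blast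
      then obtain f where f: "f \<ge> 1" "coprime w f" "{w + f*k | k. True} \<inter> pS p \<subseteq> pS p - C"
        using oD GS_open_iff by blast
      have "c dvd w" unfolding w_def by simp
      then obtain k1 k2 where kk: "w + f*k1 = x + p^m*c*k2"
        using K[OF f(2) f(1) _ c1 pj1 wm] by blast
      have "x + p^m*c*k2 \<in> C" using mc(3) by blast
      moreover hence "x + p^m*c*k2 \<in> pS p" using CS by blast
      moreover have "w + f*k1 \<in> {w + f*k | k. True}" by blast
      ultimately show False using kk f(3) by auto
    qed
  qed
  then show ?thesis using mc(1) by blast
qed

theorem lemma3p2:
  fixes p :: nat
  assumes "prime p"
  shows "subtopology (padic_topology p) {n. n \<ge> 1 \<and> \<not> p dvd n}
         = zero_dim_reflection (subtopology golomb_topology {n. n \<ge> 1 \<and> \<not> p dvd n})"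
proof -
  have pr: "prime p" by fact
  have p2: "p \<ge> 2" using pr prime_ge_2_nat by blast
  have eq: "{n. n \<ge> 1 \<and> \<not> p dvd n} = pS p" by (simp add: pS_def)
  have "openin (subtopology (padic_topology p) (pS p)) U \<longleftrightarrow>
        openin (zero_dim_reflection (subtopology golomb_topology (pS p))) U" for U
  proof
    assume "openin (subtopology (padic_topology p) (pS p)) U"
    hence H: "U \<subseteq> pS p" "\<forall>x\<in>U. \<exists>n\<ge>1. {x + p^n*k | k. True} \<subseteq> U"
      using PS_open_iff[OF pr] by blast+
    show "openin (zero_dim_reflection (subtopology golomb_topology (pS p))) U"
      unfolding zd_open_iff
    proof
      fix x assume xU: "x \<in> U"
      then obtain n where n: "n \<ge> 1" "{x + p^n*k | k. True} \<subseteq> U" using H by blast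
      have xS: "x \<ge> 1" "\<not> p dvd x" using xU H by (auto simp: pS_def)
      define N where "N = n + x"
      have "x < 2^x" by (rule less_exp)
      also have "\<dots> \<le> p^x" using p2 by (simp add: power_mono)
      also have "\<dots> \<le> p^N" unfolding N_def using p2 by (simp add: power_increasing)
      finally have xN: "x < p^N" .
      have N1: "N \<ge> 1" using n N_def by simp
      have pN: "p dvd p^N" using N1 by (simp add: dvd_power)
      define C where "C = {z. z \<ge> 1 \<and> z mod p^N = x}"
      have copN: "coprime z (p^N)" if "\<not> p dvd z" for z
        using that pr by (simp add: prime_imp_coprime coprime_commute)
      have modshift: "(y + p^N*k) mod p^N = y mod p^N" for y k by simp
      have xC: "x \<in> C" unfolding C_def using xS xN by simp
      have CS: "C \<subseteq> pS p"
      proof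
        fix z assume "z \<in> C"
        hence z: "z \<ge> 1" "z mod p^N = x" unfolding C_def by auto
        have "\<not> p dvd z"
        proof
          assume "p dvd z"
          hence "p dvd z mod p^N" using pN by (simp add: dvd_mod)
          thus False using z xS by simp
        qed
        thus "z \<in> pS p" using z by (simp add: pS_def)
      qed
      have CU: "C \<subseteq> U"
      proof
        fix z assume "z \<in> C"
        hence z: "z mod p^N = x" unfolding C_def by auto
        have "z = x + p^N * (z div p^N)" using z by (metis div_mult_mod_eq add.commute mult.commute)
        also have "\<dots> = x + p^n * (p^x * (z div p^N))" unfolding N_def by (simp add: power_add)
        finally have "z \<in> {x + p^n*k | k. True}" by blast
        thus "z \<in> U" using n by blast
      qed
      have oC: "openin (subtopology golomb_topology (pS p)) C"
        unfolding GS_open_iff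
      proof (intro conjI ballI)
        show "C \<subseteq> pS p" by (rule CS)
      next
        fix y assume yC: "y \<in> C"
        hence "\<not> p dvd y" using CS by (auto simp: pS_def)
        hence "coprime y (p^N)" by (rule copN)
        moreover have "{y + p^N*k | k. True} \<inter> pS p \<subseteq> C"
        proof
          fix z assume "z \<in> {y + p^N*k | k. True} \<inter> pS p"
          then obtain k where "z = y + p^N*k" "z \<in> pS p" by blast
          thus "z \<in> C" using yC modshift unfolding C_def by (auto simp: pS_def)
        qed
        moreover have "p^N \<ge> 1" using p2 by simp
        ultimately show "\<exists>b\<ge>1. coprime y b \<and> {y + b*k | k. True} \<inter> pS p \<subseteq> C" by blast
      qed
      have cC: "closedin (subtopology golomb_topology (pS p)) C"
        unfolding closedin_def topspace_GS
      proof (intro conjI)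
        show "C \<subseteq> pS p" by (rule CS)
        show "openin (subtopology golomb_topology (pS p)) (pS p - C)"
          unfolding GS_open_iff
        proof (intro conjI ballI)
          show "pS p - C \<subseteq> pS p" by blast
        next
          fix y assume yD: "y \<in> pS p - C"
          hence "\<not> p dvd y" "y \<ge> 1" by (auto simp: pS_def)
          hence ym: "y mod p^N \<noteq> x" using yD unfolding C_def by auto
          have "coprime y (p^N)" using copN \<open>\<not> p dvd y\<close> by blast
          moreover have "{y + p^N*k | k. True} \<inter> pS p \<subseteq> pS p - C"
          proof
            fix z assume "z \<in> {y + p^N*k | k. True} \<inter> pS p"
            then obtain k where "z = y + p^N*k" "z \<in> pS p" by blast
            thus "z \<in> pS p - C" using ym modshift unfolding C_def by auto
          qed
          moreover have "p^N \<ge> 1" using p2 by simp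
          ultimately show "\<exists>b\<ge>1. coprime y b \<and> {y + b*k | k. True} \<inter> pS p \<subseteq> pS p - C" by blast
        qed
      qed
      show "\<exists>C. openin (subtopology golomb_topology (pS p)) C \<and>
               closedin (subtopology golomb_topology (pS p)) C \<and> x \<in> C \<and> C \<subseteq> U"
        using oC cC xC CU by blast
    qed
  next
    assume "openin (zero_dim_reflection (subtopology golomb_topology (pS p))) U"
    hence H: "\<forall>x\<in>U. \<exists>C. openin (subtopology golomb_topology (pS p)) C \<and>
               closedin (subtopology golomb_topology (pS p)) C \<and> x \<in> C \<and> C \<subseteq> U"
      unfolding zd_open_iff by blast
    show "openin (subtopology (padic_topology p) (pS p)) U"
      unfolding PS_open_iff[OF pr]
    proof (intro conjI ballI)
      show "U \<subseteq> pS p"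
      proof
        fix x assume "x \<in> U"
        then obtain C where "openin (subtopology golomb_topology (pS p)) C" "x \<in> C"
          using H by blast
        thus "x \<in> pS p" using GS_open_iff by blast
      qed
    next
      fix x assume "x \<in> U"
      then obtain C where C: "openin (subtopology golomb_topology (pS p)) C"
        "closedin (subtopology golomb_topology (pS p)) C" "x \<in> C" "C \<subseteq> U"
        using H by blast
      then obtain n where "n \<ge> 1" "{x + p^n*k | k. True} \<subseteq> C" using key[OF pr C(1,2,3)] by blast
      thus "\<exists>n\<ge>1. {x + p^n*k | k. True} \<subseteq> U" using C(4) by blast
    qed
  qed
  then show ?thesis unfolding eq by (simp add: topology_eq)
qed

end
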